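(* Let $h(\cdot,\theta)=[h_1(\cdot,\theta),\dots,h_q(\cdot,\theta)]^T:\mathbb{R}^p\to\mathbb{R}^q$ be continuously differentiable in $x$ (for a fixed parameter $\theta$). For each $r\in\{1,\dots,q\}$ let $$b_r:=\sup_{x\in\mathbb{R}^p}\|\nabla_x h_r(x,\theta)\|_2,$$ and assume $0<b_r<\infty$. Fix $0<c<1$ and define $$\mathcal{B}_r:=\{x\in\mathbb{R}^p:\ \|\nabla_x h_r(x,\theta)\|_2>c\cdot b_r\},\qquad r\in\{1,\dots,q\}.$$ Suppose that $\mu\left(\bigcup_{r=1}^q\mathcal{B}_r\right)<C$ for some finite constant $C$, where $\mu$ is Lebesgue measure on $\mathbb{R}^p$. Then for every $\epsilon>0$ there exists a probability distribution $\mathcal{P}$ on $\mathbb{R}^p$ such that $$\sup_{x\in\mathbb{R}^p}\left\|\mathbb{E}_{\eta\sim\mathcal{P}}\,\nabla_x h_r(x+\eta,\theta)\right\|_2<(c+\epsilon)\cdot b_r\qquad\text{for all } r\in\{1,\dots,q\}.$$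
   Context: $h$ represents a single neural network layer with parameters $\theta$; $\nabla_x h_r(x,\theta)\in\mathbb{R}^p$ is the gradient of the $r$-th output coordinate with respect to the input $x$, and $\|\cdot\|_2$ is the Euclidean norm. The expectation is over a random perturbation $\eta$ of the input drawn from $\mathcal{P}$. *)

theory Defs
  imports "HOL-Probability.Probability"
begin

end

theory Submission
  imports Defs
begin

lemma avg_bound:
  fixes g :: "'a::euclidean_space \<Rightarrow> 'b::{banach,second_countable_topology}"
    and S :: "'a set"
  assumes cont: "continuous_on UNIV g"
    and bnd: "\<And>y. norm (g y) \<le> b"
    and D: "emeasure lborel {y. norm (g y) > c * b} < ennreal C"
    and S: "S \<in> sets lborel" "emeasure lborel S \<noteq> 0" "emeasure lborel S \<noteq> \<infinity>"
    and cb: "0 \<le> c" "0 \<le> b"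
  shows "integrable (uniform_measure lborel S) (\<lambda>\<eta>. g (x + \<eta>))"
    and "norm (\<integral>\<eta>. g (x + \<eta>) \<partial>uniform_measure lborel S) \<le> c * b + b * C / measure lborel S"
proof -
  let ?P = "uniform_measure lborel S"
  interpret P: prob_space ?P using S by (intro prob_space_uniform_measure) auto
  have gm: "g \<in> borel_measurable borel" by (rule borel_measurable_continuous_onI[OF cont])
  have gxm: "(\<lambda>\<eta>. g (x + \<eta>)) \<in> borel_measurable ?P"
  proof -
    have eq: "sets ?P = sets borel" by simp
    have "(\<lambda>\<eta>. g (x + \<eta>)) \<in> borel_measurable borel"
      using gm by measurable
    thus ?thesis unfolding measurable_cong_sets[OF eq refl] .
  qed
  show int: "integrable ?P (\<lambda>\<eta>. g (x + \<eta>))"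
    by (rule P.integrable_const_bound[where B=b]) (use bnd gxm in auto)
  define D where "D = {y. norm (g y) > c * b}"
  have Dsets: "D \<in> sets borel" unfolding D_def using gm by measurable
  define A where "A = {\<eta>. x + \<eta> \<in> D}"
  have Asets: "A \<in> sets lborel" unfolding A_def using Dsets by measurable
  have pt: "norm (g (x + \<eta>)) \<le> c * b + b * indicator A \<eta>" for \<eta>
  proof (cases "x+\<eta> \<in> D")
    case True
    have "indicator A \<eta> = (1::real)" using True by (simp add: A_def)
    moreover have "0 \<le> c * b" using cb by simp
    ultimately show ?thesis using bnd[of "x+\<eta>"] by simp
  next
    case False
    have "indicator A \<eta> = (0::real)" using False by (simp add: A_def)
    moreover have "norm (g (x + \<eta>)) \<le> c * b" using False by (simp add: D_def not_less)
    ultimately show ?thesis by simp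
  qed
  have iA: "integrable ?P (\<lambda>\<eta>. c * b + b * indicator A \<eta> :: real)"
    by (rule Bochner_Integration.integrable_add[OF P.integrable_const integrable_mult_right[OF integrable_real_indicator]])
       (use Asets in \<open>simp_all add: less_top[symmetric] P.emeasure_finite\<close>)
  have "norm (\<integral>\<eta>. g (x + \<eta>) \<partial>?P) \<le> (\<integral>\<eta>. norm (g (x + \<eta>)) \<partial>?P)"
    by (rule integral_norm_bound)
  also have "\<dots> \<le> (\<integral>\<eta>. c * b + b * indicator A \<eta> \<partial>?P)"
    using int iA by (intro integral_mono pt integrable_norm)
  also have "\<dots> = c * b + b * measure ?P A"
  proof -
    have "(\<integral>\<eta>. c * b + b * indicator A \<eta> \<partial>?P) = (\<integral>\<eta>. c * b \<partial>?P) + (\<integral>\<eta>. b * indicator A \<eta> \<partial>?P)"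
      by (rule Bochner_Integration.integral_add[OF P.integrable_const integrable_mult_right[OF integrable_real_indicator]])
         (use Asets in \<open>simp_all add: less_top[symmetric] P.emeasure_finite\<close>)
    also have "(\<integral>\<eta>. b * indicator A \<eta> \<partial>?P) = b * (\<integral>\<eta>. indicator A \<eta> \<partial>?P)"
      by simp
    also have "(\<integral>\<eta>. indicator A \<eta> \<partial>?P) = measure ?P A"
      using Asets by simp
    moreover have "measure ?P UNIV = 1" using P.prob_space by simp
    ultimately show ?thesis by simp
  qed
  also have "measure ?P A = measure lborel (S \<inter> A) / measure lborel S"
    using S Asets by (simp add: measure_uniform_measure)
  also have "measure lborel (S \<inter> A) \<le> C"
  proof -
    have "emeasure lborel (S \<inter> A) \<le> emeasure lborel A"
      using Asets by (intro emeasure_mono) auto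
    also have "emeasure lborel A = emeasure (distr lborel borel ((+) x)) D"
      using Dsets by (subst emeasure_distr) (auto simp: A_def vimage_def)
    also have "\<dots> = emeasure lborel D" by (simp add: lborel_distr_plus)
    finally have "emeasure lborel (S \<inter> A) < ennreal C" using D unfolding D_def by simp
    then have "enn2real (emeasure lborel (S \<inter> A)) \<le> enn2real (ennreal C)"
      by (intro enn2real_mono) auto
    moreover have "0 \<le> C" using \<open>emeasure lborel (S \<inter> A) < ennreal C\<close>
      proof -
      have "0 < ennreal C" using \<open>emeasure lborel (S \<inter> A) < ennreal C\<close> by (rule le_less_trans[OF zero_le])
      thus ?thesis by simp
    qed
    ultimately show ?thesis unfolding measure_def by simp
  qed
  hence "b * (measure lborel (S \<inter> A) / measure lborel S) \<le> b * (C / measure lborel S)"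
    using cb by (intro mult_left_mono divide_right_mono) auto
  finally show "norm (\<integral>\<eta>. g (x + \<eta>) \<partial>uniform_measure lborel S) \<le> c * b + b * C / measure lborel S"
    by simp
qed
theorem theorem4p1:
  fixes h :: "real^'p \<Rightarrow> real^'q"
    and G :: "'q \<Rightarrow> real^'p \<Rightarrow> real^'p"
    and c C :: real
  defines "b \<equiv> (\<lambda>r. SUP x. norm (G r x))"
      and "B \<equiv> (\<lambda>r. {x. norm (G r x) > c * (SUP y. norm (G r y))})"
  assumes grad: "\<And>r x. GDERIV (\<lambda>y. h y $ r) x :> G r x"
      and grad_cont: "\<And>r. continuous_on UNIV (G r)"
      and b_fin: "\<And>r. bdd_above (range (\<lambda>x. norm (G r x)))"
      and b_pos: "\<And>r. 0 < b r"
      and c: "0 < c" "c < 1"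
      and meas: "emeasure lborel (\<Union>r. B r) < ennreal C"
  shows "\<forall>\<epsilon>>0. \<exists>P :: (real^'p) measure.
           prob_space P \<and> sets P = sets borel \<and>
           (\<forall>r. (\<forall>x. integrable P (\<lambda>\<eta>. G r (x + \<eta>))) \<and>
                bdd_above (range (\<lambda>x. norm (\<integral>\<eta>. G r (x + \<eta>) \<partial>P))) \<and>
                (SUP x. norm (\<integral>\<eta>. G r (x + \<eta>) \<partial>P)) < (c + \<epsilon>) * b r)"
  proof (intro allI impI)
  fix \<epsilon> :: real assume e: "\<epsilon> > 0"
  have Cpos: "C > 0" using meas proof -
    have "0 < ennreal C" using meas by (rule le_less_trans[OF zero_le])
    thus ?thesis by simp
  qed
  define L where "L = max 1 (C / \<epsilon>)"
  have L1: "L \<ge> 1" and LC: "L \<ge> C / \<epsilon>" unfolding L_def by auto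
  define S :: "(real^'p) set" where "S = cbox (-(L *\<^sub>R One)) (L *\<^sub>R One)"
  have eS: "emeasure lborel S = ennreal ((2*L) ^ DIM(real^'p))"
  proof -
    have inn: "(L *\<^sub>R One - - (L *\<^sub>R One)) \<bullet> x = 2*L" if "x \<in> (Basis :: (real^'p) set)" for x
      using that by (simp only: inner_diff_left inner_minus_left inner_scaleR_left inner_sum_left_Basis) simp
    have le: "\<forall>x\<in>(Basis :: (real^'p) set). (-(L *\<^sub>R One)) \<bullet> x \<le> (L *\<^sub>R One) \<bullet> x"
      using L1 by (simp add: inner_simps)
    have "emeasure lborel S = ennreal (\<Prod>x\<in>(Basis :: (real^'p) set). (L *\<^sub>R One - - (L *\<^sub>R One)) \<bullet> x)"
      unfolding S_def emeasure_lborel_cbox_eq by (subst if_P[OF le]) (rule refl)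
    also have "\<dots> = ennreal (\<Prod>x\<in>(Basis :: (real^'p) set). 2*L)"
      by (intro arg_cong[where f=ennreal] prod.cong refl inn)
    finally show ?thesis by simp
  qed
  have V: "(2*L) ^ DIM(real^'p) \<ge> 2*L"
    using L1 using power_increasing[of 1 "DIM(real^'p)" "2*L"] DIM_positive[where 'a="real^'p"] by simp
  have Vpos: "(2*L) ^ DIM(real^'p) > 0" using L1 by simp
  have mS: "measure lborel S = (2*L) ^ DIM(real^'p)" unfolding measure_def eS using Vpos by simp
  have Ssets: "S \<in> sets lborel" "emeasure lborel S \<noteq> 0" "emeasure lborel S \<noteq> \<infinity>"
    using eS Vpos L1 by (auto simp: S_def)
  have CV: "C / measure lborel S \<le> \<epsilon> / 2"
  proof -
    have "C \<le> \<epsilon> * L" using LC e by (simp add: field_simps)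
    also have "\<epsilon> * L = \<epsilon> / 2 * (2*L)" by simp
    also have "\<dots> \<le> \<epsilon> / 2 * measure lborel S" unfolding mS using e by (intro mult_left_mono[OF V]) simp
    finally have "C \<le> \<epsilon> / 2 * measure lborel S" .
    thus ?thesis using Vpos mS by (simp add: field_simps)
  qed
  have Uopen: "open (\<Union>r. B r)" unfolding B_def
    by (intro open_UN ballI open_Collect_less continuous_intros grad_cont continuous_on_norm)
  show "\<exists>P :: (real^'p) measure.
           prob_space P \<and> sets P = sets borel \<and>
           (\<forall>r. (\<forall>x. integrable P (\<lambda>\<eta>. G r (x + \<eta>))) \<and>
                bdd_above (range (\<lambda>x. norm (\<integral>\<eta>. G r (x + \<eta>) \<partial>P))) \<and>
                (SUP x. norm (\<integral>\<eta>. G r (x + \<eta>) \<partial>P)) < (c + \<epsilon>) * b r)"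
  proof (intro exI conjI allI)
    show "prob_space (uniform_measure lborel S)" using Ssets by (intro prob_space_uniform_measure) auto
    show "sets (uniform_measure lborel S) = sets borel" by simp
    fix r
    have bnd: "norm (G r y) \<le> b r" for y unfolding b_def by (rule cSUP_upper) (use b_fin in auto)
    have D: "emeasure lborel {y. norm (G r y) > c * b r} < ennreal C"
    proof -
      have "emeasure lborel {y. norm (G r y) > c * b r} \<le> emeasure lborel (\<Union>r. B r)"
        using Uopen by (intro emeasure_mono) (auto simp: B_def b_def)
      thus ?thesis using meas by simp
    qed
    note ab = avg_bound[OF grad_cont bnd D Ssets, of x for x] 
    show "integrable (uniform_measure lborel S) (\<lambda>\<eta>. G r (x + \<eta>))" for x
      using ab(1) c b_pos[of r] by auto
    have nb: "norm (\<integral>\<eta>. G r (x + \<eta>) \<partial>uniform_measure lborel S) \<le> c * b r + b r * (\<epsilon>/2)" for x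
    proof -
      have "norm (\<integral>\<eta>. G r (x + \<eta>) \<partial>uniform_measure lborel S) \<le> c * b r + b r * C / measure lborel S"
        using ab(2) c b_pos[of r] by auto
      also have "\<dots> \<le> c * b r + b r * (\<epsilon>/2)"
        using CV b_pos[of r] mult_left_mono[OF CV, of "b r"] by simp
      finally show ?thesis .
    qed
    show "bdd_above (range (\<lambda>x. norm (\<integral>\<eta>. G r (x + \<eta>) \<partial>uniform_measure lborel S)))"
      using nb by (intro bdd_aboveI2) 
    have "(SUP x. norm (\<integral>\<eta>. G r (x + \<eta>) \<partial>uniform_measure lborel S)) \<le> c * b r + b r * (\<epsilon>/2)"
      using nb by (intro cSUP_least) auto
    also have "\<dots> < (c + \<epsilon>) * b r" using e b_pos[of r] by (simp add: algebra_simps)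
    finally show "(SUP x. norm (\<integral>\<eta>. G r (x + \<eta>) \<partial>uniform_measure lborel S)) < (c + \<epsilon>) * b r" .
  qed
qed

end
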